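(* Under the standing assumptions below, suppose $3\sigma>2L$, $0<\gamma<\frac{3\sigma-2L}{L^2}$, and that the sequence $\{(y^t,z^t,x^t)\}$ generated by the PR splitting iteration has a cluster point $(y^*,z^*,x^* )$. Suppose also that $\mathcal{P}_\gamma$ is a KL function. Then the whole sequence $\{(y^t,z^t,x^t)\}$ is convergent.
   Context: Standing assumptions: $f:\mathbb{R}^n\to\mathbb{R}$ is differentiable and strongly convex with modulus at least $\sigma>0$ (i.e. $f-\frac{\sigma}{2}\|\cdot\|^2$ is convex), and $\nabla f$ is Lipschitz continuous with modulus at most $L>0$. The function $g:\mathbb{R}^n\to(-\infty,\infty]$ is proper and lower semicontinuous, and for the $\gamma>0$ used, $\operatorname{Argmin}_u\{\gamma g(u)+\frac12\|u-w\|^2\}$ is nonempty for every $w\in\mathbb{R}^n$. PR splitting iteration: given $x^0$ and $\gamma>0$, for $t=0,1,2,\dots$: $y^{t+1}=\operatorname{argmin}_y\{f(y)+\frac{1}{2\gamma}\|y-x^t\|^2\}$; $z^{t+1}\in\operatorname{Argmin}_z\{g(z)+\frac{1}{2\gamma}\|2y^{t+1}-x^t-z\|^2\}$; $x^{t+1}=x^t+2(z^{t+1}-y^{t+1})$. Merit function: $\mathcal{P}_\gamma(y,z,x):=f(y)+g(z)-\frac{3}{2\gamma}\|y-z\|^2+\frac{1}{\gamma}\langle x-y,z-y\rangle$. KL function: a proper lower semicontinuous $h$ is a KL function if it has the Kurdyka–Łojasiewicz property at every point $\bar w$ of $\operatorname{dom}\partial h$, i.e. there exist $\eta\in(0,\infty]$,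 a neighborhood $U$ of $\bar w$ and a continuous concave $\varphi:[0,\eta)\to[0,\infty)$ with $\varphi(0)=0$, $\varphi$ continuously differentiable on $(0,\eta)$ with $\varphi'>0$, such that $\varphi'(h(w)-h(\bar w))\operatorname{dist}(0,\partial h(w))\ge1$ for all $w\in U$ with $h(\bar w)<h(w)<h(\bar w)+\eta$ ($\partial$ the limiting subdifferential). *)

theory Defs
  imports "HOL-Analysis.Analysis" "HOL-Library.Extended_Real"
begin

definition proper_fun :: "('a \<Rightarrow> ereal) \<Rightarrow> bool" where
  "proper_fun h \<longleftrightarrow> (\<forall>x. h x \<noteq> -\<infinity>) \<and> (\<exists>x. h x \<noteq> \<infinity>)"

definition lsc_fun :: "('a::topological_space \<Rightarrow> ereal) \<Rightarrow> bool" where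
  "lsc_fun h \<longleftrightarrow> (\<forall>x. h x \<le> Liminf (at x) h)"

text \<open>Frechet (regular) subdifferential: v is a regular subgradient of h at w
  iff h w is finite and liminf_{u -> w, u ~= w} (h u - h w - <v, u - w>)/|u - w| >= 0,
  written out in epsilon-delta form.\<close>

definition frechet_subdiff :: "('a::real_inner \<Rightarrow> ereal) \<Rightarrow> 'a \<Rightarrow> 'a set" where
  "frechet_subdiff h w = {v. \<bar>h w\<bar> \<noteq> \<infinity> \<and>
     (\<forall>\<epsilon>>0. \<exists>\<delta>>0. \<forall>u. norm (u - w) < \<delta> \<longrightarrow>
        h u \<ge> h w + ereal (inner v (u - w) - \<epsilon> * norm (u - w)))}"

definition limiting_subdiff :: "('a::real_inner \<Rightarrow> ereal) \<Rightarrow> 'a \<Rightarrow> 'a set" where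
  "limiting_subdiff h w = {v. \<exists>ws vs. ws \<longlonglongrightarrow> w \<and> (\<lambda>k. h (ws k)) \<longlonglongrightarrow> h w \<and>
     (\<forall>k. vs k \<in> frechet_subdiff h (ws k)) \<and> vs \<longlonglongrightarrow> v}"

text \<open>The condition phi'(h w - h wbar) * dist(0, dh(w)) >= 1 is
  written out as: for every v in dh(w), phi'(h w - h wbar) * |v| >= 1
  (with the usual convention dist(0, {}) = +infinity).\<close>

definition KL_at :: "('a::real_inner \<Rightarrow> ereal) \<Rightarrow> 'a \<Rightarrow> bool" where
  "KL_at h wbar \<longleftrightarrow> (\<exists>(\<eta>::ereal) U (\<phi>::real \<Rightarrow> real) (\<phi>'::real \<Rightarrow> real).
     0 < \<eta> \<and> open U \<and> wbar \<in> U \<and>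
     continuous_on {s. 0 \<le> s \<and> ereal s < \<eta>} \<phi> \<and>
     concave_on {s. 0 \<le> s \<and> ereal s < \<eta>} \<phi> \<and>
     \<phi> 0 = 0 \<and> (\<forall>s. 0 \<le> s \<and> ereal s < \<eta> \<longrightarrow> 0 \<le> \<phi> s) \<and>
     (\<forall>s. 0 < s \<and> ereal s < \<eta> \<longrightarrow> (\<phi> has_real_derivative \<phi>' s) (at s) \<and> 0 < \<phi>' s) \<and>
     continuous_on {s. 0 < s \<and> ereal s < \<eta>} \<phi>' \<and>
     (\<forall>w\<in>U. h wbar < h w \<and> h w < h wbar + \<eta> \<longrightarrow>
        (\<forall>v\<in>limiting_subdiff h w. \<phi>' (real_of_ereal (h w - h wbar)) * norm v \<ge> 1)))"

definition KL_function :: "('a::real_inner \<Rightarrow> ereal) \<Rightarrow> bool" where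
  "KL_function h \<longleftrightarrow> proper_fun h \<and> lsc_fun h \<and>
     (\<forall>wbar. limiting_subdiff h wbar \<noteq> {} \<longrightarrow> KL_at h wbar)"

definition merit :: "('a::real_inner \<Rightarrow> real) \<Rightarrow> ('a \<Rightarrow> ereal) \<Rightarrow> real \<Rightarrow> 'a \<times> 'a \<times> 'a \<Rightarrow> ereal" where
  "merit f g \<gamma> = (\<lambda>(y, z, x). ereal (f y - 3 / (2 * \<gamma>) * (norm (y - z))\<^sup>2
      + (1 / \<gamma>) * inner (x - y) (z - y)) + g z)"

end

theory Submission
  imports Defs
begin


lemma descent_identity:
  fixes a p z' gp ga :: "'a::real_inner" and \<gamma> :: real
  assumes g: "\<gamma> > 0"
  shows "- 3 / (2 * \<gamma>) * (norm (p - z'))\<^sup>2 + (1 / \<gamma>) * inner ((p + \<gamma> *\<^sub>R gp) + 2 *\<^sub>R (z' - p) - p) (z' - p)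
         - (norm (2 *\<^sub>R p - (p + \<gamma> *\<^sub>R gp) - z'))\<^sup>2 / (2 * \<gamma>) + (norm (2 *\<^sub>R p - (p + \<gamma> *\<^sub>R gp) - (a + (1/2) *\<^sub>R ((p + \<gamma> *\<^sub>R gp) - (a + \<gamma> *\<^sub>R ga)))))\<^sup>2 / (2 * \<gamma>)
         - (- 3 / (2 * \<gamma>) * (norm (a - (a + (1/2) *\<^sub>R ((p + \<gamma> *\<^sub>R gp) - (a + \<gamma> *\<^sub>R ga)))))\<^sup>2 + (1 / \<gamma>) * inner ((p + \<gamma> *\<^sub>R gp) - a) ((a + (1/2) *\<^sub>R ((p + \<gamma> *\<^sub>R gp) - (a + \<gamma> *\<^sub>R ga))) - a))
       = - inner (p - a) gp + \<gamma> / 2 * (norm (gp - ga))\<^sup>2"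
  using g unfolding power2_norm_eq_inner
  by (simp add: inner_simps inner_commute field_simps)


lemma frechet_identity:
  fixes p zz gp uy uz ux :: "'a::real_inner" and \<gamma> :: real
  assumes g: "\<gamma> > 0"
  shows "(- 3 / (2 * \<gamma>) * (norm (uy - uz))\<^sup>2 + (1 / \<gamma>) * inner (ux - uy) (uz - uy))
     + ((norm (2 *\<^sub>R p - (p + \<gamma> *\<^sub>R gp) - zz))\<^sup>2 - (norm (2 *\<^sub>R p - (p + \<gamma> *\<^sub>R gp) - uz))\<^sup>2) / (2 * \<gamma>)
     = (- 3 / (2 * \<gamma>) * (norm (p - zz))\<^sup>2 + (1 / \<gamma>) * inner ((p + \<gamma> *\<^sub>R gp) + 2 *\<^sub>R (zz - p) - p) (zz - p))
       - inner gp (uy - p) + inner ((- 2 / \<gamma>) *\<^sub>R (zz - p)) (uz - zz) + inner ((1 / \<gamma>) *\<^sub>R (zz - p)) (ux - ((p + \<gamma> *\<^sub>R gp) + 2 *\<^sub>R (zz - p)))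
       + (- 3 / (2 * \<gamma>) * (norm ((uy - p) - (uz - zz)))\<^sup>2 + (1 / \<gamma>) * inner ((ux - ((p + \<gamma> *\<^sub>R gp) + 2 *\<^sub>R (zz - p))) - (uy - p)) ((uz - zz) - (uy - p)))
       - (norm (uz - zz))\<^sup>2 / (2 * \<gamma>)"
  using g unfolding power2_norm_eq_inner
  by (simp add: inner_simps inner_commute field_simps)

lemma quad_bound:
  fixes dy dz dx :: "'a::real_inner" and \<gamma> N :: real
  assumes g: "\<gamma> > 0" and N: "norm dy \<le> N" "norm dz \<le> N" "norm dx \<le> N"
  shows "- 3 / (2 * \<gamma>) * (norm (dy - dz))\<^sup>2 + (1 / \<gamma>) * inner (dx - dy) (dz - dy) \<ge> - (10 / \<gamma>) * N\<^sup>2"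
proof -
  have N0: "0 \<le> N" using N(1) norm_ge_zero order.trans by blast
  have a: "norm (dy - dz) \<le> 2 * N" using norm_triangle_ineq4[of dy dz] N by linarith
  have b: "norm (dx - dy) \<le> 2 * N" using norm_triangle_ineq4[of dx dy] N by linarith
  have c: "norm (dz - dy) \<le> 2 * N" using norm_triangle_ineq4[of dz dy] N by linarith
  have "(norm (dy - dz))\<^sup>2 \<le> (2 * N)\<^sup>2" by (rule power_mono[OF a norm_ge_zero])
  moreover have "\<bar>inner (dx - dy) (dz - dy)\<bar> \<le> (2 * N) * (2 * N)"
    using Cauchy_Schwarz_ineq2[of "dx - dy" "dz - dy"] b c
    by (meson mult_mono norm_ge_zero order_trans)
  ultimately have 1: "(norm (dy - dz))\<^sup>2 \<le> 4 * N\<^sup>2" and 2: "inner (dx - dy) (dz - dy) \<ge> - (4 * N\<^sup>2)"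
    by (simp_all add: power2_eq_square abs_le_iff)
  have "3 / (2 * \<gamma>) * (norm (dy - dz))\<^sup>2 \<le> 3 / (2 * \<gamma>) * (4 * N\<^sup>2)"
    using 1 g by (intro mult_left_mono) auto
  moreover have "(1 / \<gamma>) * inner (dx - dy) (dz - dy) \<ge> (1 / \<gamma>) * (- (4 * N\<^sup>2))"
    using 2 g by (intro mult_left_mono) auto
  ultimately show ?thesis using g by (simp add: field_simps)
qed



locale PR =
  fixes f :: "'a::euclidean_space \<Rightarrow> real"
    and gradf :: "'a \<Rightarrow> 'a"
    and g :: "'a \<Rightarrow> ereal"
    and \<sigma> L \<gamma> :: real
    and y z x :: "nat \<Rightarrow> 'a"
  assumes sigma_pos: "\<sigma> > 0" and L_pos: "L > 0"
    and f_grad: "\<And>u. (f has_derivative (\<lambda>h. inner (gradf u) h)) (at u)"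
    and f_strongly_convex: "convex_on UNIV (\<lambda>u. f u - \<sigma> / 2 * (norm u)\<^sup>2)"
    and gradf_Lipschitz: "\<And>u v. norm (gradf u - gradf v) \<le> L * norm (u - v)"
    and g_proper: "proper_fun g" and g_lsc: "lsc_fun g"
    and gamma_pos: "0 < \<gamma>" and gamma_bound: "\<gamma> < (3 * \<sigma> - 2 * L) / L\<^sup>2"
    and y_step: "\<And>t u. f (y (Suc t)) + (norm (y (Suc t) - x t))\<^sup>2 / (2 * \<gamma>)
                        \<le> f u + (norm (u - x t))\<^sup>2 / (2 * \<gamma>)"
    and z_step: "\<And>t u. g (z (Suc t)) + ereal ((norm (2 *\<^sub>R y (Suc t) - x t - z (Suc t)))\<^sup>2 / (2 * \<gamma>))
                        \<le> g u + ereal ((norm (2 *\<^sub>R y (Suc t) - x t - u))\<^sup>2 / (2 * \<gamma>))"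
    and x_step: "\<And>t. x (Suc t) = x t + 2 *\<^sub>R (z (Suc t) - y (Suc t))"
begin

lemma x_eq: "x t = y (Suc t) + \<gamma> *\<^sub>R gradf (y (Suc t))"
proof -
  define c where "c = x t"
  define u where "u = y (Suc t)"
  let ?F = "\<lambda>v. f v + inner (v - c) (v - c) / (2 * \<gamma>)"
  have D: "(?F has_derivative (\<lambda>h. inner (gradf u) h + (inner h (u - c) + inner (u - c) h) / (2 * \<gamma>))) (at u)"
  proof -
    have i: "((\<lambda>v. inner (v - c) (v - c)) has_derivative (\<lambda>h. inner (u - c) (h - 0) + inner (h - 0) (u - c))) (at u)"
      by (rule has_derivative_inner[OF has_derivative_diff[OF has_derivative_ident has_derivative_const] has_derivative_diff[OF has_derivative_ident has_derivative_const]])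
    have i2: "((\<lambda>v. inner (v - c) (v - c) / (2 * \<gamma>)) has_derivative (\<lambda>h. (inner (u - c) (h - 0) + inner (h - 0) (u - c)) / (2 * \<gamma>))) (at u)"
      by (rule bounded_linear.has_derivative[OF bounded_linear_divide i])
    show ?thesis using has_derivative_add[OF f_grad i2] by (simp add: add.commute)
  qed
  have "\<forall>v\<in>UNIV. ?F u \<le> ?F v"
    using y_step[of t] unfolding u_def c_def power2_norm_eq_inner by auto
  from differential_zero_maxmin[OF _ _ D] this
  have "(\<lambda>h. inner (gradf u) h + (inner h (u - c) + inner (u - c) h) / (2 * \<gamma>)) = (\<lambda>h. 0)"
    by auto
  then have Z: "inner (gradf u) w + (inner w (u - c) + inner (u - c) w) / (2 * \<gamma>) = 0" for w
    by metis
  have "inner (gradf u) w + inner (u - c) w / \<gamma> = 0" for w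
    using Z[of w] gamma_pos inner_commute[of w "u - c"] by (simp add: field_simps)
  then have "inner (gradf u + (1/\<gamma>) *\<^sub>R (u - c)) w = 0" for w
    by (simp only: inner_add_left inner_scaleR_left) (simp add: field_simps)
  from this[of "gradf u + (1/\<gamma>) *\<^sub>R (u - c)"] have "gradf u + (1/\<gamma>) *\<^sub>R (u - c) = 0" by simp
  then have "\<gamma> *\<^sub>R (gradf u + (1/\<gamma>) *\<^sub>R (u - c)) = 0" by simp
  then have "\<gamma> *\<^sub>R gradf u + (u - c) = 0" using gamma_pos by (simp add: scaleR_add_right)
  then show ?thesis unfolding u_def c_def by (simp add: algebra_simps eq_neg_iff_add_eq_0)
qed

lemma grad_ineq: "f u \<ge> f v + inner (gradf v) (u - v) + \<sigma> / 2 * (norm (u - v))\<^sup>2"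
proof -
  define F where "F = (\<lambda>u. f u - \<sigma> / 2 * (norm u)\<^sup>2)"
  define \<psi> where "\<psi> = (\<lambda>t::real. F (v + t *\<^sub>R (u - v)))"
  have cF: "convex_on UNIV F" using f_strongly_convex F_def by simp
  have cpsi: "convex_on UNIV \<psi>"
  proof (rule convex_onI)
    fix t a b :: real assume t: "0 < t" "t < 1"
    have "v + ((1 - t) * a + t * b) *\<^sub>R (u - v) = (1 - t) *\<^sub>R (v + a *\<^sub>R (u - v)) + t *\<^sub>R (v + b *\<^sub>R (u - v))"
      by (simp add: algebra_simps)
    then show "\<psi> ((1 - t) *\<^sub>R a + t *\<^sub>R b) \<le> (1 - t) * \<psi> a + t * \<psi> b"
      unfolding \<psi>_def using convex_onD[OF cF, of t] t by simp
  qed simp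
  have DF: "(F has_derivative (\<lambda>h. inner (gradf w0 - \<sigma> *\<^sub>R w0) h)) (at w0)" for w0
    unfolding F_def power2_norm_eq_inner
    apply (rule has_derivative_eq_rhs)
     apply (rule derivative_eq_intros f_grad refl)+
    by (auto simp: fun_eq_iff field_simps inner_commute inner_simps)
  have "((\<lambda>t. F (v + t *\<^sub>R (u - v))) has_derivative (\<lambda>h. inner (gradf v - \<sigma> *\<^sub>R v) (h *\<^sub>R (u - v)))) (at 0)"
  proof -
    have L1: "((\<lambda>t. v + t *\<^sub>R (u - v)) has_derivative (\<lambda>h. 0 + h *\<^sub>R (u - v))) (at 0)"
      by (intro has_derivative_add has_derivative_const has_derivative_scaleR_left has_derivative_ident)
    show ?thesis
      by (rule has_derivative_eq_rhs[OF has_derivative_compose[where f="\<lambda>t. v + t *\<^sub>R (u - v)" and g=F, OF L1 DF[of "v + 0 *\<^sub>R (u - v)"]]])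
        (auto simp: fun_eq_iff)
  qed
  then have "(\<psi> has_field_derivative inner (gradf v - \<sigma> *\<^sub>R v) (u - v)) (at 0)"
    unfolding \<psi>_def has_field_derivative_def
    by (rule has_derivative_eq_rhs) (auto simp: fun_eq_iff inner_simps algebra_simps)
  then have "\<psi> 1 - \<psi> 0 \<ge> inner (gradf v - \<sigma> *\<^sub>R v) (u - v) * (1 - 0)"
    by (intro convex_on_imp_above_tangent[OF cpsi]) (auto simp: has_field_derivative_at_within)
  then have "F u - F v \<ge> inner (gradf v - \<sigma> *\<^sub>R v) (u - v)" unfolding \<psi>_def by simp
  then show ?thesis unfolding F_def power2_norm_eq_inner by (simp add: inner_simps inner_commute algebra_simps)
qed

lemma sigma_le_L: "\<sigma> \<le> L"
proof -
  obtain b :: 'a where b: "b \<in> Basis" using nonempty_Basis by blast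
  then have nb: "norm b = 1" by simp
  have 1: "f b \<ge> f 0 + inner (gradf 0) b + \<sigma> / 2" using grad_ineq[where u=b and v=0] nb by simp
  have 2: "f 0 \<ge> f b + inner (gradf b) (- b) + \<sigma> / 2" using grad_ineq[where u=0 and v=b] nb by simp
  have "inner (gradf b - gradf 0) b \<le> norm (gradf b - gradf 0) * norm b" by (rule norm_cauchy_schwarz)
  also have "\<dots> \<le> L" using gradf_Lipschitz[of b 0] nb by simp
  finally have "inner (gradf b - gradf 0) b \<le> L" .
  with 1 2 show ?thesis by (simp add: inner_simps)
qed


lemma g_fin: "\<bar>g (z (Suc t))\<bar> \<noteq> \<infinity>"
proof -
  obtain u0 where u0: "g u0 \<noteq> \<infinity>" using g_proper unfolding proper_fun_def by blast
  have ninf: "g (z (Suc t)) \<noteq> - \<infinity>" using g_proper unfolding proper_fun_def by blast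
  have "g (z (Suc t)) + ereal ((norm (2 *\<^sub>R y (Suc t) - x t - z (Suc t)))\<^sup>2 / (2 * \<gamma>))
        \<le> g u0 + ereal ((norm (2 *\<^sub>R y (Suc t) - x t - u0))\<^sup>2 / (2 * \<gamma>))" by (rule z_step)
  moreover have "g u0 + ereal ((norm (2 *\<^sub>R y (Suc t) - x t - u0))\<^sup>2 / (2 * \<gamma>)) \<noteq> \<infinity>"
    using u0 by simp
  ultimately have "g (z (Suc t)) \<noteq> \<infinity>" by auto
  with ninf show ?thesis by auto
qed

definition G :: "nat \<Rightarrow> real" where "G k = real_of_ereal (g (z k))"

lemma g_eq: "g (z (Suc t)) = ereal (G (Suc t))"
  using g_fin[of t] unfolding G_def by (cases "g (z (Suc t))") auto

lemma ereal_le_diff: "ereal a \<le> e + ereal b \<Longrightarrow> ereal (a - b) \<le> e"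
  by (cases e) auto

lemma z_low: "ereal (G (Suc t) + (norm (2 *\<^sub>R y (Suc t) - x t - z (Suc t)))\<^sup>2 / (2 * \<gamma>)
                - (norm (2 *\<^sub>R y (Suc t) - x t - u))\<^sup>2 / (2 * \<gamma>)) \<le> g u"
  using z_step[of t u] unfolding g_eq by (intro ereal_le_diff) simp

lemma z_low_real: "G (Suc t) + (norm (2 *\<^sub>R y (Suc t) - x t - z (Suc t)))\<^sup>2 / (2 * \<gamma>)
                \<le> G (Suc k) + (norm (2 *\<^sub>R y (Suc t) - x t - z (Suc k)))\<^sup>2 / (2 * \<gamma>)"
  using z_low[of t "z (Suc k)"] unfolding g_eq by simp

definition H :: "nat \<Rightarrow> real" where
  "H k = f (y k) - 3 / (2 * \<gamma>) * (norm (y k - z k))\<^sup>2 + (1 / \<gamma>) * inner (x k - y k) (z k - y k) + G k"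

definition W :: "nat \<Rightarrow> 'a \<times> 'a \<times> 'a" where "W k = (y k, z k, x k)"

lemma merit_W: "merit f g \<gamma> (W (Suc t)) = ereal (H (Suc t))"
  unfolding merit_def W_def H_def using g_eq by simp

definition acon :: real where "acon = (\<sigma> - \<gamma> * L\<^sup>2) / 2"

lemma acon_pos: "acon > 0"
proof -
  have "\<gamma> * L\<^sup>2 < 3 * \<sigma> - 2 * L" using gamma_bound L_pos by (simp add: field_simps)
  then have "\<gamma> * L\<^sup>2 < \<sigma>" using sigma_le_L by linarith
  then show ?thesis unfolding acon_def by simp
qed

lemma descent: "H (Suc (Suc t)) \<le> H (Suc t) - acon * (norm (y (Suc (Suc t)) - y (Suc t)))\<^sup>2"
proof -
  define a where "a = y (Suc t)"
  define p where "p = y (Suc (Suc t))"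
  define ga where "ga = gradf a"
  define gp where "gp = gradf p"
  define z' where "z' = z (Suc (Suc t))"
  have c: "x (Suc t) = p + \<gamma> *\<^sub>R gp" using x_eq[of "Suc t"] p_def gp_def by simp
  have e: "x t = a + \<gamma> *\<^sub>R ga" using x_eq[of t] a_def ga_def by simp
  have b: "z (Suc t) = a + (1/2) *\<^sub>R (x (Suc t) - (a + \<gamma> *\<^sub>R ga))"
  proof -
    have "x (Suc t) - x t = 2 *\<^sub>R (z (Suc t) - a)" using x_step[of t] a_def by simp
    then have "(1/2) *\<^sub>R (x (Suc t) - x t) = z (Suc t) - a" by simp
    then show ?thesis unfolding e[symmetric] by simp
  qed
  have x': "x (Suc (Suc t)) = x (Suc t) + 2 *\<^sub>R (z' - p)" using x_step[of "Suc t"] z'_def p_def by simp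
  have zl: "G (Suc (Suc t)) + (norm (2 *\<^sub>R p - x (Suc t) - z'))\<^sup>2 / (2 * \<gamma>)
                \<le> G (Suc t) + (norm (2 *\<^sub>R p - x (Suc t) - z (Suc t)))\<^sup>2 / (2 * \<gamma>)"
    using z_low_real[of "Suc t" t] p_def z'_def by simp
  have gi: "f a \<ge> f p + inner gp (a - p) + \<sigma> / 2 * (norm (a - p))\<^sup>2"
    using grad_ineq[where u=a and v=p] gp_def by simp
  have lip: "norm (gp - ga) \<le> L * norm (p - a)" using gradf_Lipschitz gp_def ga_def by simp
  then have lip2: "(norm (gp - ga))\<^sup>2 \<le> L\<^sup>2 * (norm (p - a))\<^sup>2"
    by (metis norm_ge_zero power_mono power_mult_distrib)
  have id: "- 3 / (2 * \<gamma>) * (norm (p - z'))\<^sup>2 + (1 / \<gamma>) * inner (x (Suc (Suc t)) - p) (z' - p)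
         - (norm (2 *\<^sub>R p - x (Suc t) - z'))\<^sup>2 / (2 * \<gamma>) + (norm (2 *\<^sub>R p - x (Suc t) - z (Suc t)))\<^sup>2 / (2 * \<gamma>)
         - (- 3 / (2 * \<gamma>) * (norm (a - z (Suc t)))\<^sup>2 + (1 / \<gamma>) * inner (x (Suc t) - a) (z (Suc t) - a))
       = - inner (p - a) gp + \<gamma> / 2 * (norm (gp - ga))\<^sup>2"
    unfolding x' b c by (rule descent_identity[OF gamma_pos])
  have nm: "norm (a - p) = norm (p - a)" by (rule norm_minus_commute)
  have ii: "inner gp (a - p) = - inner (p - a) gp" by (simp add: inner_commute inner_diff)
  have gi2: "f a \<ge> f p - inner (p - a) gp + \<sigma> / 2 * (norm (p - a))\<^sup>2"
    using gi unfolding nm ii by simp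
  have lm: "\<gamma> / 2 * (norm (gp - ga))\<^sup>2 \<le> \<gamma> / 2 * (L\<^sup>2 * (norm (p - a))\<^sup>2)"
    using lip2 gamma_pos by (intro mult_left_mono) auto
  have ac: "acon * (norm (p - a))\<^sup>2 = \<sigma> / 2 * (norm (p - a))\<^sup>2 - \<gamma> / 2 * (L\<^sup>2 * (norm (p - a))\<^sup>2)"
    unfolding acon_def by (simp add: field_simps)
  have HH: "H (Suc (Suc t)) = f p - 3 / (2 * \<gamma>) * (norm (p - z'))\<^sup>2 + (1 / \<gamma>) * inner (x (Suc (Suc t)) - p) (z' - p) + G (Suc (Suc t))"
    by (simp only: H_def p_def z'_def)
  have H1: "H (Suc t) = f a - 3 / (2 * \<gamma>) * (norm (a - z (Suc t)))\<^sup>2 + (1 / \<gamma>) * inner (x (Suc t) - a) (z (Suc t) - a) + G (Suc t)"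
    by (simp only: H_def a_def)
  have "H (Suc (Suc t)) \<le> H (Suc t) - acon * (norm (p - a))\<^sup>2"
    using HH H1 id zl gi2 lm ac by linarith
  then show ?thesis by (simp only: p_def a_def)
qed


definition vv :: "nat \<Rightarrow> 'a \<times> 'a \<times> 'a" where
  "vv k = (0, (- 2 / \<gamma>) *\<^sub>R (z k - y k), (1 / \<gamma>) *\<^sub>R (z k - y k))"

lemma vv_frechet: "vv (Suc t) \<in> frechet_subdiff (merit f g \<gamma>) (W (Suc t))"
proof -
  define p where "p = y (Suc t)"
  define zz where "zz = z (Suc t)"
  define gp where "gp = gradf p"
  have xt: "x t = p + \<gamma> *\<^sub>R gp" using x_eq[of t] p_def gp_def by simp
  have xs: "x (Suc t) = x t + 2 *\<^sub>R (zz - p)" using x_step[of t] p_def zz_def by simp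
  have HW: "H (Suc t) = f p + (- 3 / (2 * \<gamma>) * (norm (p - zz))\<^sup>2 + (1 / \<gamma>) * inner (x (Suc t) - p) (zz - p)) + G (Suc t)"
    unfolding H_def p_def zz_def by simp
  have main: "merit f g \<gamma> u \<ge> merit f g \<gamma> (W (Suc t)) + ereal (inner (vv (Suc t)) (u - W (Suc t)) - \<epsilon> * norm (u - W (Suc t)))"
    if eps: "\<epsilon> > 0" and un: "norm (u - W (Suc t)) < \<epsilon> * \<gamma> / 11" for u \<epsilon>
  proof -
    obtain uy uz ux where u: "u = (uy, uz, ux)" by (cases u) auto
    define N where "N = norm (u - W (Suc t))"
    have dW: "u - W (Suc t) = (uy - p, uz - zz, ux - x (Suc t))" unfolding u W_def p_def zz_def by simp
    have N1: "norm (uy - p) \<le> N" unfolding N_def dW by (rule norm_fst_le)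
    have N2: "norm (uz - zz) \<le> N" unfolding N_def dW
      by (meson norm_fst_le norm_snd_le order_trans)
    have N3: "norm (ux - x (Suc t)) \<le> N" unfolding N_def dW
      by (meson norm_snd_le order_trans)
    have N0: "0 \<le> N" unfolding N_def by simp
    have zl: "ereal (G (Suc t) + (norm (2 *\<^sub>R p - x t - zz))\<^sup>2 / (2 * \<gamma>)
                - (norm (2 *\<^sub>R p - x t - uz))\<^sup>2 / (2 * \<gamma>)) \<le> g uz"
      using z_low[of t uz] p_def zz_def by simp
    have fl: "f uy \<ge> f p + inner gp (uy - p)"
      using grad_ineq[where u=uy and v=p] gp_def sigma_pos
      by (smt (verit) zero_le_power2 divide_nonneg_pos mult_nonneg_nonneg)
    have idt: "(- 3 / (2 * \<gamma>) * (norm (uy - uz))\<^sup>2 + (1 / \<gamma>) * inner (ux - uy) (uz - uy))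
     + ((norm (2 *\<^sub>R p - x t - zz))\<^sup>2 - (norm (2 *\<^sub>R p - x t - uz))\<^sup>2) / (2 * \<gamma>)
     = (- 3 / (2 * \<gamma>) * (norm (p - zz))\<^sup>2 + (1 / \<gamma>) * inner (x (Suc t) - p) (zz - p))
       - inner gp (uy - p) + inner ((- 2 / \<gamma>) *\<^sub>R (zz - p)) (uz - zz) + inner ((1 / \<gamma>) *\<^sub>R (zz - p)) (ux - x (Suc t))
       + (- 3 / (2 * \<gamma>) * (norm ((uy - p) - (uz - zz)))\<^sup>2 + (1 / \<gamma>) * inner ((ux - x (Suc t)) - (uy - p)) ((uz - zz) - (uy - p)))
       - (norm (uz - zz))\<^sup>2 / (2 * \<gamma>)"
      unfolding xs xt by (rule frechet_identity[OF gamma_pos])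
    have qb: "- 3 / (2 * \<gamma>) * (norm ((uy - p) - (uz - zz)))\<^sup>2 + (1 / \<gamma>) * inner ((ux - x (Suc t)) - (uy - p)) ((uz - zz) - (uy - p))
              \<ge> - (10 / \<gamma>) * N\<^sup>2"
      by (rule quad_bound[OF gamma_pos N1 N2 N3])
    have nz: "(norm (uz - zz))\<^sup>2 / (2 * \<gamma>) \<le> (1 / \<gamma>) * N\<^sup>2"
    proof -
      have "(norm (uz - zz))\<^sup>2 \<le> N\<^sup>2" by (rule power_mono[OF N2 norm_ge_zero])
      then have "(norm (uz - zz))\<^sup>2 \<le> 2 * N\<^sup>2" using zero_le_power2[of N] by linarith
      then show ?thesis using gamma_pos by (simp add: field_simps)
    qed
    have NN: "(11 / \<gamma>) * N\<^sup>2 \<le> \<epsilon> * N"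
    proof -
      have "N \<le> \<epsilon> * \<gamma> / 11" using un N_def by simp
      then have "(11 / \<gamma>) * N \<le> \<epsilon>" using gamma_pos by (simp add: field_simps)
      then have "(11 / \<gamma>) * N * N \<le> \<epsilon> * N" using N0 by (rule mult_right_mono)
      then show ?thesis by (simp add: power2_eq_square mult.assoc)
    qed
    have inn: "inner (vv (Suc t)) (u - W (Suc t)) = inner ((- 2 / \<gamma>) *\<^sub>R (zz - p)) (uz - zz) + inner ((1 / \<gamma>) *\<^sub>R (zz - p)) (ux - x (Suc t))"
      unfolding dW vv_def p_def zz_def by simp
    have real: "f uy + (- 3 / (2 * \<gamma>) * (norm (uy - uz))\<^sup>2 + (1 / \<gamma>) * inner (ux - uy) (uz - uy))
                 + (G (Suc t) + (norm (2 *\<^sub>R p - x t - zz))\<^sup>2 / (2 * \<gamma>) - (norm (2 *\<^sub>R p - x t - uz))\<^sup>2 / (2 * \<gamma>))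
               \<ge> H (Suc t) + inner (vv (Suc t)) (u - W (Suc t)) - \<epsilon> * N"
      unfolding inn HW using idt fl qb nz NN by (simp add: diff_divide_distrib)
    have "merit f g \<gamma> u = ereal (f uy + (- 3 / (2 * \<gamma>) * (norm (uy - uz))\<^sup>2 + (1 / \<gamma>) * inner (ux - uy) (uz - uy))) + g uz"
      unfolding u merit_def by (simp add: algebra_simps)
    also have "\<dots> \<ge> ereal (f uy + (- 3 / (2 * \<gamma>) * (norm (uy - uz))\<^sup>2 + (1 / \<gamma>) * inner (ux - uy) (uz - uy)))
         + ereal (G (Suc t) + (norm (2 *\<^sub>R p - x t - zz))\<^sup>2 / (2 * \<gamma>) - (norm (2 *\<^sub>R p - x t - uz))\<^sup>2 / (2 * \<gamma>))"
      using zl by (rule add_left_mono)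
    finally have X: "ereal (f uy + (- 3 / (2 * \<gamma>) * (norm (uy - uz))\<^sup>2 + (1 / \<gamma>) * inner (ux - uy) (uz - uy))
                 + (G (Suc t) + (norm (2 *\<^sub>R p - x t - zz))\<^sup>2 / (2 * \<gamma>) - (norm (2 *\<^sub>R p - x t - uz))\<^sup>2 / (2 * \<gamma>))) \<le> merit f g \<gamma> u"
      by simp
    have Y: "ereal (H (Suc t) + (inner (vv (Suc t)) (u - W (Suc t)) - \<epsilon> * N)) \<le> ereal (f uy + (- 3 / (2 * \<gamma>) * (norm (uy - uz))\<^sup>2 + (1 / \<gamma>) * inner (ux - uy) (uz - uy))
                 + (G (Suc t) + (norm (2 *\<^sub>R p - x t - zz))\<^sup>2 / (2 * \<gamma>) - (norm (2 *\<^sub>R p - x t - uz))\<^sup>2 / (2 * \<gamma>)))"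
      using real by simp
    show ?thesis using order.trans[OF Y X] unfolding merit_W N_def by simp
  qed
  show ?thesis
    unfolding frechet_subdiff_def merit_W
  proof (intro CollectI conjI allI impI)
    fix \<epsilon> :: real assume e: "\<epsilon> > 0"
    show "\<exists>\<delta>>0. \<forall>u. norm (u - W (Suc t)) < \<delta> \<longrightarrow>
        ereal (H (Suc t)) + ereal (inner (vv (Suc t)) (u - W (Suc t)) - \<epsilon> * norm (u - W (Suc t))) \<le> merit f g \<gamma> u"
      using main[OF e] merit_W e gamma_pos by (intro exI[of _ "\<epsilon> * \<gamma> / 11"]) auto
  qed simp
qed


definition dd :: "nat \<Rightarrow> real" where "dd k = norm (y (Suc k) - y k)"

lemma dx_bound: "norm (x (Suc k) - x k) \<le> (1 + \<gamma> * L) * dd (Suc k)"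
proof -
  have "x (Suc k) - x k = (y (Suc (Suc k)) - y (Suc k)) + \<gamma> *\<^sub>R (gradf (y (Suc (Suc k))) - gradf (y (Suc k)))"
    using x_eq[of k] x_eq[of "Suc k"] by (simp add: algebra_simps)
  then have "norm (x (Suc k) - x k) \<le> dd (Suc k) + \<gamma> * norm (gradf (y (Suc (Suc k))) - gradf (y (Suc k)))"
    unfolding dd_def \<open>x (Suc k) - x k = _\<close>
    using norm_triangle_ineq[of "y (Suc (Suc k)) - y (Suc k)" "\<gamma> *\<^sub>R (gradf (y (Suc (Suc k))) - gradf (y (Suc k)))"] gamma_pos by simp
  also have "\<dots> \<le> dd (Suc k) + \<gamma> * (L * dd (Suc k))"
    using gradf_Lipschitz[of "y (Suc (Suc k))" "y (Suc k)"] gamma_pos unfolding dd_def by (intro add_left_mono mult_left_mono) auto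
  finally show ?thesis by (simp add: algebra_simps)
qed

lemma z_eq: "z (Suc k) = y (Suc k) + (1/2) *\<^sub>R (x (Suc k) - x k)"
  using x_step[of k] by simp

lemma vv_norm: "norm (vv (Suc t)) \<le> (3 / (2 * \<gamma>)) * ((1 + \<gamma> * L) * dd (Suc t))"
proof -
  have "norm (vv (Suc t)) \<le> norm (0::'a) + norm ((- 2 / \<gamma>) *\<^sub>R (z (Suc t) - y (Suc t)), (1 / \<gamma>) *\<^sub>R (z (Suc t) - y (Suc t)))"
    unfolding vv_def by (rule norm_Pair_le)
  also have "\<dots> \<le> 0 + (norm ((- 2 / \<gamma>) *\<^sub>R (z (Suc t) - y (Suc t))) + norm ((1 / \<gamma>) *\<^sub>R (z (Suc t) - y (Suc t))))"
    using norm_Pair_le[of "(- 2 / \<gamma>) *\<^sub>R (z (Suc t) - y (Suc t))" "(1 / \<gamma>) *\<^sub>R (z (Suc t) - y (Suc t))"] by simp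
  also have "\<dots> = (3 / \<gamma>) * norm (z (Suc t) - y (Suc t))" using gamma_pos by (simp only: norm_scaleR) (simp add: field_simps)
  also have "\<dots> = (3 / (2 * \<gamma>)) * norm (x (Suc t) - x t)" unfolding z_eq by simp
  also have "\<dots> \<le> (3 / (2 * \<gamma>)) * ((1 + \<gamma> * L) * dd (Suc t))"
    using dx_bound gamma_pos by (intro mult_left_mono) auto
  finally show ?thesis by simp
qed

lemma W_step: "norm (W (Suc (Suc t)) - W (Suc t)) \<le> (3 + 2 * \<gamma> * L) * (dd (Suc t) + dd (Suc (Suc t)))"
proof -
  define c where "c = 1 + \<gamma> * L"
  have c0: "c \<ge> 1" unfolding c_def using gamma_pos L_pos by simp
  have e1: "norm (x (Suc t) - x t) \<le> c * dd (Suc t)" using dx_bound c_def by simp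
  have e2: "norm (x (Suc (Suc t)) - x (Suc t)) \<le> c * dd (Suc (Suc t))" using dx_bound c_def by simp
  have "z (Suc (Suc t)) - z (Suc t) = (y (Suc (Suc t)) - y (Suc t)) + (1/2) *\<^sub>R (x (Suc (Suc t)) - x (Suc t)) - (1/2) *\<^sub>R (x (Suc t) - x t)"
    unfolding z_eq by (simp add: algebra_simps)
  then have ez: "norm (z (Suc (Suc t)) - z (Suc t)) \<le> dd (Suc t) + (1/2) * norm (x (Suc (Suc t)) - x (Suc t)) + (1/2) * norm (x (Suc t) - x t)"
  proof -
    have "norm (z (Suc (Suc t)) - z (Suc t)) \<le> norm ((y (Suc (Suc t)) - y (Suc t)) + (1/2) *\<^sub>R (x (Suc (Suc t)) - x (Suc t))) + norm ((1/2) *\<^sub>R (x (Suc t) - x t))"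
      unfolding \<open>z (Suc (Suc t)) - z (Suc t) = _\<close> by (rule norm_triangle_ineq4)
    also have "\<dots> \<le> norm (y (Suc (Suc t)) - y (Suc t)) + norm ((1/2) *\<^sub>R (x (Suc (Suc t)) - x (Suc t))) + norm ((1/2) *\<^sub>R (x (Suc t) - x t))"
      by (intro add_right_mono norm_triangle_ineq)
    finally show ?thesis unfolding dd_def by simp
  qed
  have "W (Suc (Suc t)) - W (Suc t) = (y (Suc (Suc t)) - y (Suc t), z (Suc (Suc t)) - z (Suc t), x (Suc (Suc t)) - x (Suc t))"
    unfolding W_def by simp
  have "norm (W (Suc (Suc t)) - W (Suc t)) \<le> dd (Suc t) + (norm (z (Suc (Suc t)) - z (Suc t)) + norm (x (Suc (Suc t)) - x (Suc t)))"
  proof -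
    have "norm (y (Suc (Suc t)) - y (Suc t), z (Suc (Suc t)) - z (Suc t), x (Suc (Suc t)) - x (Suc t))
       \<le> norm (y (Suc (Suc t)) - y (Suc t)) + norm (z (Suc (Suc t)) - z (Suc t), x (Suc (Suc t)) - x (Suc t))"
      by (rule norm_Pair_le)
    also have "\<dots> \<le> norm (y (Suc (Suc t)) - y (Suc t)) + (norm (z (Suc (Suc t)) - z (Suc t)) + norm (x (Suc (Suc t)) - x (Suc t)))"
      by (intro add_left_mono norm_Pair_le)
    finally show ?thesis unfolding \<open>W (Suc (Suc t)) - W (Suc t) = _\<close> dd_def .
  qed
  also have "\<dots> \<le> dd (Suc t) + ((dd (Suc t) + (1/2) * (c * dd (Suc (Suc t))) + (1/2) * (c * dd (Suc t))) + c * dd (Suc (Suc t)))"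
    using ez e1 e2 by linarith
  also have "\<dots> \<le> (3 + 2 * \<gamma> * L) * (dd (Suc t) + dd (Suc (Suc t)))"
  proof -
    have "dd (Suc t) \<ge> 0" "dd (Suc (Suc t)) \<ge> 0" unfolding dd_def by auto
    moreover have "L * \<gamma> \<ge> 0" using L_pos gamma_pos by simp
    ultimately have "0 \<le> L * (\<gamma> * dd (Suc t))" "0 \<le> L * (\<gamma> * dd (Suc (Suc t)))"
      by (simp_all add: mult.assoc[symmetric])
    then show ?thesis using \<open>dd (Suc t) \<ge> 0\<close> \<open>dd (Suc (Suc t)) \<ge> 0\<close> unfolding c_def
      by (simp add: algebra_simps)
  qed
  finally show ?thesis .
qed

lemma frechet_limiting: "v \<in> frechet_subdiff h w \<Longrightarrow> v \<in> limiting_subdiff h w"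
  unfolding limiting_subdiff_def by (rule CollectI, rule exI[of _ "\<lambda>_. w"], rule exI[of _ "\<lambda>_. v"]) auto

end



lemma concave_tangent:
  fixes \<phi> :: "real \<Rightarrow> real" and \<eta> :: ereal
  assumes cc: "concave_on {s. 0 \<le> s \<and> ereal s < \<eta>} \<phi>"
    and s: "0 < s" "ereal s < \<eta>"
    and der: "(\<phi> has_real_derivative \<phi>s) (at s)"
    and s': "0 \<le> s'" "ereal s' < \<eta>"
  shows "\<phi> s - \<phi> s' \<ge> \<phi>s * (s - s')"
proof -
  define D where "D = {s. 0 \<le> s \<and> ereal s < \<eta>}"
  have cv: "convex_on D (\<lambda>x. - \<phi> x)" using cc unfolding D_def concave_on_def .
  have "convex D" using cc concave_on_imp_convex unfolding D_def by blast
  then have con: "connected D" by (rule convex_connected)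
  obtain e where e: "s < e" "ereal e < \<eta>" using ereal_dense2[OF s(2)] by auto
  have "ball s (min s (e - s)) \<subseteq> D"
  proof
    fix u assume "u \<in> ball s (min s (e - s))"
    then have "0 \<le> u" "u \<le> e" by (auto simp: dist_real_def)
    then show "u \<in> D" unfolding D_def using e(2) by (auto intro: le_less_trans[of "ereal u" "ereal e"])
  qed
  then have int: "s \<in> interior D" using s e by (auto simp: mem_interior intro!: exI[of _ "min s (e - s)"])
  have "((\<lambda>x. - \<phi> x) has_field_derivative - \<phi>s) (at s within D)"
    using DERIV_minus[OF der] by (rule has_field_derivative_at_within)
  from convex_on_imp_above_tangent[OF cv con int _ this, of s'] s'
  show ?thesis unfolding D_def by (simp add: algebra_simps)
qed


lemma frechet_limiting': "v \<in> frechet_subdiff h w \<Longrightarrow> v \<in> limiting_subdiff h w"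
  unfolding limiting_subdiff_def by (rule CollectI, rule exI[of _ "\<lambda>_. w"], rule exI[of _ "\<lambda>_. v"]) auto

lemma summable_diff_convergent:
  fixes Wf :: "nat \<Rightarrow> 'b::banach"
  assumes "summable (\<lambda>k. norm (Wf (Suc k) - Wf k))"
  shows "convergent Wf"
proof -
  have "summable (\<lambda>k. Wf (Suc k) - Wf k)" using assms by (rule summable_norm_cancel)
  then have "(\<lambda>n. \<Sum>k<n. Wf (Suc k) - Wf k) \<longlonglongrightarrow> (\<Sum>k. Wf (Suc k) - Wf k)" by (rule summable_LIMSEQ)
  then have "(\<lambda>n. Wf 0 + (\<Sum>k<n. Wf (Suc k) - Wf k)) \<longlonglongrightarrow> Wf 0 + (\<Sum>k. Wf (Suc k) - Wf k)"
    by (intro tendsto_intros)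
  then show ?thesis unfolding sum_lessThan_telescope convergent_def by auto
qed

lemma KL_abstract:
  fixes h :: "'b::euclidean_space \<Rightarrow> ereal" and Wf :: "nat \<Rightarrow> 'b" and Hf d :: "nat \<Rightarrow> real"
    and v :: "nat \<Rightarrow> 'b" and a b M hs :: real and ws :: 'b and r :: "nat \<Rightarrow> nat"
  assumes a: "a > 0" and b: "b > 0" and M: "M \<ge> 0"
  and hW: "\<And>k. k \<ge> 1 \<Longrightarrow> h (Wf k) = ereal (Hf k)"
  and desc: "\<And>k. k \<ge> 1 \<Longrightarrow> Hf (Suc k) \<le> Hf k - a * (d k)\<^sup>2"
  and d0: "\<And>k. d k \<ge> 0"
  and vsub: "\<And>k. k \<ge> 1 \<Longrightarrow> v k \<in> frechet_subdiff h (Wf k)"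
  and vn: "\<And>k. k \<ge> 1 \<Longrightarrow> norm (v k) \<le> b * d k"
  and stp: "\<And>k. k \<ge> 1 \<Longrightarrow> norm (Wf (Suc k) - Wf k) \<le> M * (d k + d (Suc k))"
  and r: "strict_mono r" and r1: "\<And>j. r j \<ge> 1"
  and lim: "(\<lambda>j. Wf (r j)) \<longlonglongrightarrow> ws" and limH: "(\<lambda>j. Hf (r j)) \<longlonglongrightarrow> hs" and hws: "h ws = ereal hs"
  and KL: "limiting_subdiff h ws \<noteq> {} \<Longrightarrow> KL_at h ws"
  shows "convergent Wf"
proof -
  have Hmono: "Hf m \<le> Hf k" if "1 \<le> k" "k \<le> m" for k m
    using that(2)
  proof (induction m rule: dec_induct)
    case (step n)
    have "Hf (Suc n) \<le> Hf n - a * (d n)\<^sup>2" using desc step that by simp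
    also have "\<dots> \<le> Hf n" using a by simp
    finally show ?case using step by simp
  qed simp
  have Hge: "hs \<le> Hf k" if "1 \<le> k" for k
  proof (rule LIMSEQ_le_const2[OF limH])
    show "\<exists>N. \<forall>n\<ge>N. Hf (r n) \<le> Hf k"
    proof (intro exI[of _ k] allI impI)
      fix n assume "k \<le> n"
      then have "k \<le> r n" using seq_suble[OF r, of n] by simp
      then show "Hf (r n) \<le> Hf k" by (rule Hmono[OF that])
    qed
  qed
  have dbd: "a * (d k)\<^sup>2 \<le> Hf k - hs" if "1 \<le> k" for k
    using desc[OF that] Hge[of "Suc k"] by simp
  have sumb: "(\<Sum>i<n. a * (d (Suc i))\<^sup>2) \<le> Hf 1 - Hf (Suc n)" for n
  proof (induction n)
    case (Suc n)
    have "Hf (Suc (Suc n)) \<le> Hf (Suc n) - a * (d (Suc n))\<^sup>2" using desc[of "Suc n"] by simp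
    then show ?case using Suc by simp
  qed simp
  have "summable (\<lambda>i. a * (d (Suc i))\<^sup>2)"
  proof (rule summableI_nonneg_bounded)
    show "0 \<le> a * (d (Suc n))\<^sup>2" for n using a by simp
    show "(\<Sum>i<n. a * (d (Suc i))\<^sup>2) \<le> Hf 1 - hs" for n using sumb[of n] Hge[of "Suc n"] by simp
  qed
  then have "(\<lambda>i. a * (d (Suc i))\<^sup>2) \<longlonglongrightarrow> 0" by (rule summable_LIMSEQ_zero)
  then have "(\<lambda>i. sqrt (a * (d (Suc i))\<^sup>2 / a)) \<longlonglongrightarrow> sqrt (0 / a)"
    by (intro tendsto_intros) (use a in auto)
  moreover have "sqrt (a * (d (Suc i))\<^sup>2 / a) = d (Suc i)" for i using a d0[of "Suc i"] by simp
  ultimately have "(\<lambda>i. d (Suc i)) \<longlonglongrightarrow> 0" by simp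
  then have dlim: "d \<longlonglongrightarrow> 0" by (rule LIMSEQ_imp_Suc)
  have zero_sub: "0 \<in> limiting_subdiff h ws"
    unfolding limiting_subdiff_def
  proof (intro CollectI exI conjI allI)
    show "(\<lambda>j. Wf (r j)) \<longlonglongrightarrow> ws" by (rule lim)
    show "(\<lambda>j. h (Wf (r j))) \<longlonglongrightarrow> h ws" using limH hW[OF r1] hws by simp
    show "v (r j) \<in> frechet_subdiff h (Wf (r j))" for j by (rule vsub[OF r1])
    have "(\<lambda>j. b * d (r j)) \<longlonglongrightarrow> b * 0"
      by (intro tendsto_intros filterlim_compose[OF dlim filterlim_subseq[OF r]])
    moreover have "eventually (\<lambda>j. norm (v (r j)) \<le> b * d (r j)) sequentially"
      by (intro always_eventually allI vn[OF r1])
    ultimately show "(\<lambda>j. v (r j)) \<longlonglongrightarrow> 0"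
      using Lim_null_comparison by auto
  qed
  then have "KL_at h ws" using KL by auto
  then obtain \<eta> U \<phi> \<phi>' where
    eta: "0 < \<eta>" and U: "open U" "ws \<in> U"
    and phic: "continuous_on {s. 0 \<le> s \<and> ereal s < \<eta>} \<phi>"
    and phicc: "concave_on {s. 0 \<le> s \<and> ereal s < \<eta>} \<phi>"
    and phi0: "\<phi> 0 = 0" and phinn: "\<And>s. 0 \<le> s \<Longrightarrow> ereal s < \<eta> \<Longrightarrow> 0 \<le> \<phi> s"
    and phid: "\<And>s. 0 < s \<Longrightarrow> ereal s < \<eta> \<Longrightarrow> (\<phi> has_real_derivative \<phi>' s) (at s) \<and> 0 < \<phi>' s"
    and KLi: "\<And>w. w \<in> U \<Longrightarrow> h ws < h w \<Longrightarrow> h w < h ws + \<eta> \<Longrightarrow>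
        (\<forall>v\<in>limiting_subdiff h w. \<phi>' (real_of_ereal (h w - h ws)) * norm v \<ge> 1)"
    unfolding KL_at_def by blast
  have sumd: "summable d"
  proof (cases "\<exists>K\<ge>1. Hf K = hs")
    case True
    then obtain K where K: "K \<ge> 1" "Hf K = hs" by auto
    have dz: "d k = 0" if "k \<ge> K" for k
    proof -
      have "a * (d k)\<^sup>2 \<le> 0" using dbd[of k] Hmono[of K k] K that by simp
      then show ?thesis using a d0[of k] by (simp add: mult_le_0_iff)
    qed
    show ?thesis by (rule summable_comparison_test'[of "\<lambda>_. 0 :: real" K]) (simp_all add: dz)
  next
    case False
    have Hgt: "hs < Hf k" if "k \<ge> 1" for k
    proof -
      have "Hf k \<noteq> hs" using False that by blast
      then show ?thesis using Hge[OF that] by linarith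
    qed
    obtain \<rho> where rho: "\<rho> > 0" "ball ws \<rho> \<subseteq> U" using U open_contains_ball by blast
    define s where "s k = Hf k - hs" for k
    have spos: "0 < s k" if "1 \<le> k" for k using Hgt[OF that] s_def by simp
    have smono: "s m \<le> s k" if "1 \<le> k" "k \<le> m" for k m using Hmono[OF that] s_def by simp
    obtain e0 where e0: "0 < ereal e0" "ereal e0 < \<eta>" using ereal_dense2[OF eta] by blast
    then have e0r: "0 < e0" by simp
    have KEY: "d k \<le> (b / a) * (\<phi> (s k) - \<phi> (s (Suc k)))"
      if N1: "1 \<le> N" and Nk: "N \<le> k" and sN: "ereal (s N) < \<eta>" and Wk: "Wf k \<in> ball ws \<rho>" for N k
    proof -
      have k1: "1 \<le> k" using N1 Nk by simp
      have sk: "0 < s k" using spos[OF k1] .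
      have "ereal (s k) \<le> ereal (s N)" using smono[OF N1 Nk] by simp
      then have skn: "ereal (s k) < \<eta>" using sN by (rule le_less_trans)
      have sk1: "0 \<le> s (Suc k)" using spos[of "Suc k"] by simp
      have "ereal (s (Suc k)) \<le> ereal (s k)" using smono[OF k1, of "Suc k"] by simp
      then have sk1n: "ereal (s (Suc k)) < \<eta>" using skn by (rule le_less_trans)
      have der: "(\<phi> has_real_derivative \<phi>' (s k)) (at (s k))" and Qpos: "0 < \<phi>' (s k)"
        using phid[OF sk skn] by auto
      have WU: "Wf k \<in> U" using Wk rho by auto
      have lt1: "h ws < h (Wf k)" using hW[OF k1] hws Hgt[OF k1] by simp
      have lt2: "h (Wf k) < h ws + \<eta>"
      proof (cases \<eta>)
        case (real r)
        then show ?thesis using skn hW[OF k1] hws s_def by simp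
      next
        case PInf
        then show ?thesis using hW[OF k1] hws by simp
      next
        case MInf
        then show ?thesis using eta by simp
      qed
      have re: "real_of_ereal (h (Wf k) - h ws) = s k" using hW[OF k1] hws s_def by simp
      have "\<phi>' (s k) * norm (v k) \<ge> 1"
        using KLi[OF WU lt1 lt2] frechet_limiting'[OF vsub[OF k1]] unfolding re by blast
      also have "\<phi>' (s k) * norm (v k) \<le> \<phi>' (s k) * (b * d k)"
        using vn[OF k1] Qpos by (intro mult_left_mono) auto
      finally have one: "1 \<le> \<phi>' (s k) * (b * d k)" .
      have two: "\<phi> (s k) - \<phi> (s (Suc k)) \<ge> \<phi>' (s k) * (s k - s (Suc k))"
        by (rule concave_tangent[OF phicc sk skn der sk1 sk1n])
      have three: "s k - s (Suc k) \<ge> a * (d k)\<^sup>2" using desc[OF k1] s_def by simp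
      have "\<phi>' (s k) * (s k - s (Suc k)) \<ge> \<phi>' (s k) * (a * (d k)\<^sup>2)"
        using three Qpos by (intro mult_left_mono) auto
      with two have four: "\<phi> (s k) - \<phi> (s (Suc k)) \<ge> \<phi>' (s k) * (a * (d k)\<^sup>2)" by linarith
      define P where "P = \<phi> (s k) - \<phi> (s (Suc k))"
      have bd0: "0 \<le> b * d k" using b d0[of k] by simp
      have "b * d k * P \<ge> b * d k * (\<phi>' (s k) * (a * (d k)\<^sup>2))"
        using four bd0 unfolding P_def by (intro mult_left_mono) auto
      moreover have "b * d k * (\<phi>' (s k) * (a * (d k)\<^sup>2)) = (a * (d k)\<^sup>2) * (\<phi>' (s k) * (b * d k))"
        by (simp add: algebra_simps)
      moreover have "(a * (d k)\<^sup>2) * (\<phi>' (s k) * (b * d k)) \<ge> (a * (d k)\<^sup>2) * 1"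
        using one a by (intro mult_left_mono) auto
      ultimately have five: "b * d k * P \<ge> a * (d k)\<^sup>2" by linarith
      show ?thesis
      proof (cases "d k = 0")
        case True
        have "P \<ge> 0" using four True unfolding P_def by simp
        then show ?thesis using True a b unfolding P_def by simp
      next
        case False
        then have dpos: "d k > 0" using d0[of k] by simp
        have "d k * (b * P) \<ge> d k * (a * d k)" using five by (simp add: power2_eq_square algebra_simps)
        then have "b * P \<ge> a * d k" using dpos by (simp add: mult_le_cancel_left)
        then show ?thesis using a unfolding P_def by (simp add: field_simps)
      qed
    qed
    define D where "D = {s. 0 \<le> s \<and> ereal s < \<eta>}"
    have slim: "(\<lambda>j. s (r j)) \<longlonglongrightarrow> 0"
      using tendsto_diff[OF limH tendsto_const[of hs]] unfolding s_def by simp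
    have ev1: "eventually (\<lambda>j. dist (Wf (r j)) ws < \<rho> / 2) sequentially"
      using tendstoD[OF lim, of "\<rho> / 2"] rho by simp
    have ev2: "eventually (\<lambda>j. s (r j) < e0) sequentially"
      using order_tendstoD(2)[OF slim e0r] .
    have evD: "eventually (\<lambda>j. s (r j) \<in> D) sequentially"
      using ev2
    proof eventually_elim
      case (elim j)
      have "ereal (s (r j)) < ereal e0" using elim by simp
      then have "ereal (s (r j)) < \<eta>" using e0(2) by (rule less_trans)
      then show ?case unfolding D_def using spos[OF r1[of j]] by simp
    qed
    have D0: "0 \<in> D" unfolding D_def using eta by (simp add: zero_ereal_def)
    have philim: "(\<lambda>j. \<phi> (s (r j))) \<longlonglongrightarrow> 0"
      using continuous_on_tendsto_compose[OF phic[folded D_def] slim D0 evD] phi0 by simp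
    have "(\<lambda>j. 2 * M * ((b / a) * \<phi> (s (r j)) + sqrt (s (r j) / a))) \<longlonglongrightarrow> 2 * M * ((b / a) * 0 + sqrt (0 / a))"
      using a by (intro tendsto_intros philim slim) auto
    then have L0: "(\<lambda>j. 2 * M * ((b / a) * \<phi> (s (r j)) + sqrt (s (r j) / a))) \<longlonglongrightarrow> 0" by simp
    have ev3: "eventually (\<lambda>j. 2 * M * ((b / a) * \<phi> (s (r j)) + sqrt (s (r j) / a)) < \<rho> / 2) sequentially"
      using order_tendstoD(2)[OF L0, of "\<rho> / 2"] rho by simp
    obtain j0 where j0: "\<forall>j\<ge>j0. dist (Wf (r j)) ws < \<rho> / 2 \<and> s (r j) < e0 \<and>
         2 * M * ((b / a) * \<phi> (s (r j)) + sqrt (s (r j) / a)) < \<rho> / 2"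
      using eventually_conj[OF ev1 eventually_conj[OF ev2 ev3]] unfolding eventually_sequentially by blast
    define N where "N = r j0"
    have N1: "1 \<le> N" unfolding N_def by (rule r1)
    have NW: "dist (Wf N) ws < \<rho> / 2" and Ne: "s N < e0"
      and Nexp: "2 * M * ((b / a) * \<phi> (s N) + sqrt (s N / a)) < \<rho> / 2"
      using j0 unfolding N_def by auto
    have sNeta: "ereal (s N) < \<eta>" using Ne e0(2) by (metis less_ereal.simps(1) less_trans)
    have inva: "norm (Wf (N + m) - Wf N) \<le> M * (2 * (\<Sum>k\<in>{N..<N + m}. d k) + d (N + m))" for m
    proof (induction m)
      case 0
      then show ?case using M d0[of N] by simp
    next
      case (Suc m)
      have "Wf (N + Suc m) - Wf N = (Wf (Suc (N + m)) - Wf (N + m)) + (Wf (N + m) - Wf N)" by simp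
      then have "norm (Wf (N + Suc m) - Wf N) \<le> norm (Wf (Suc (N + m)) - Wf (N + m)) + norm (Wf (N + m) - Wf N)"
        by (metis norm_triangle_ineq)
      also have "\<dots> \<le> M * (d (N + m) + d (Suc (N + m))) + M * (2 * (\<Sum>k\<in>{N..<N + m}. d k) + d (N + m))"
        using stp[of "N + m"] N1 Suc by (intro add_mono) auto
      also have "\<dots> = M * (2 * (\<Sum>k\<in>{N..<N + Suc m}. d k) + d (N + Suc m))"
        by (simp add: algebra_simps)
      finally show ?case .
    qed
    have invb: "(\<Sum>k\<in>{N..<N + m}. d k) \<le> (b / a) * (\<phi> (s N) - \<phi> (s (N + m)))"
      if "\<forall>k. N \<le> k \<and> k < N + m \<longrightarrow> Wf k \<in> ball ws \<rho>" for m
      using that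
    proof (induction m)
      case 0
      then show ?case by simp
    next
      case (Suc m)
      have "(\<Sum>k\<in>{N..<N + m}. d k) \<le> (b / a) * (\<phi> (s N) - \<phi> (s (N + m)))"
        using Suc by auto
      moreover have "d (N + m) \<le> (b / a) * (\<phi> (s (N + m)) - \<phi> (s (Suc (N + m))))"
        using KEY[OF N1 _ sNeta, of "N + m"] Suc.prems by simp
      ultimately show ?case by (simp add: algebra_simps)
    qed
    have dsq: "d k \<le> sqrt (s N / a)" if "N \<le> k" for k
    proof -
      have "a * (d k)\<^sup>2 \<le> s N" using dbd[of k] smono[OF N1 that] N1 that s_def by simp
      then have "(d k)\<^sup>2 \<le> s N / a" using a by (simp add: field_simps)
      then show ?thesis by (rule real_le_rsqrt)
    qed
    have phiN: "0 \<le> \<phi> (s k)" if "N \<le> k" for k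
    proof -
      have "ereal (s k) \<le> ereal (s N)" using smono[OF N1 that] by simp
      then have "ereal (s k) < \<eta>" using sNeta by (rule le_less_trans)
      then show ?thesis using phinn spos[of k] N1 that by simp
    qed
    have allin: "Wf (N + m) \<in> ball ws \<rho>" for m
    proof (induction m rule: less_induct)
      case (less m)
      have hyp: "\<forall>k. N \<le> k \<and> k < N + m \<longrightarrow> Wf k \<in> ball ws \<rho>"
      proof (intro allI impI)
        fix k assume k: "N \<le> k \<and> k < N + m"
        then have "Wf (N + (k - N)) \<in> ball ws \<rho>" using less[of "k - N"] k by (simp add: less_diff_conv2 add.commute)
        then show "Wf k \<in> ball ws \<rho>" using k by simp
      qed
      have S: "(\<Sum>k\<in>{N..<N + m}. d k) \<le> (b / a) * \<phi> (s N)"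
      proof -
        have "(\<Sum>k\<in>{N..<N + m}. d k) \<le> (b / a) * (\<phi> (s N) - \<phi> (s (N + m)))" by (rule invb[OF hyp])
        also have "\<dots> \<le> (b / a) * \<phi> (s N)" using phiN[of "N + m"] a b by (simp add: algebra_simps)
        finally show ?thesis .
      qed
      have "norm (Wf (N + m) - Wf N) \<le> M * (2 * (\<Sum>k\<in>{N..<N + m}. d k) + d (N + m))" by (rule inva)
      also have "\<dots> \<le> M * (2 * ((b / a) * \<phi> (s N)) + sqrt (s N / a))"
        using S dsq[of "N + m"] M by (intro mult_left_mono) auto
      also have "\<dots> \<le> 2 * M * ((b / a) * \<phi> (s N) + sqrt (s N / a))"
      proof -
        have "0 \<le> sqrt (s N / a)" using spos[OF N1] a by simp
        then have "0 \<le> M * sqrt (s N / a)" using M by simp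
        then show ?thesis by (simp add: algebra_simps)
      qed
      finally have "norm (Wf (N + m) - Wf N) < \<rho> / 2" using Nexp by linarith
      then have "dist ws (Wf (N + m)) < \<rho>"
        using NW dist_triangle[of ws "Wf (N + m)" "Wf N"] unfolding dist_norm
        by (simp add: norm_minus_commute[of ws "Wf N"] norm_minus_commute[of "Wf N" "Wf (N + m)"])
      then show ?case by simp
    qed
    show ?thesis
    proof (rule summableI_nonneg_bounded)
      show "0 \<le> d n" for n by (rule d0)
      show "(\<Sum>i<n. d i) \<le> (\<Sum>i<N. d i) + (b / a) * \<phi> (s N)" for n
      proof (cases "n \<le> N")
        case True
        then have "(\<Sum>i<n. d i) \<le> (\<Sum>i<N. d i)" by (intro sum_mono2) (auto intro: d0)
        moreover have "0 \<le> (b / a) * \<phi> (s N)" using phiN[of N] a b by simp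
        ultimately show ?thesis by linarith
      next
        case False
        have "(\<Sum>i<n. d i) = (\<Sum>i<N. d i) + (\<Sum>i\<in>{N..<N + (n - N)}. d i)"
          using False by (simp add: atLeast0LessThan[symmetric] sum.atLeastLessThan_concat)
        moreover have "(\<Sum>i\<in>{N..<N + (n - N)}. d i) \<le> (b / a) * \<phi> (s N)"
        proof -
          have "(\<Sum>i\<in>{N..<N + (n - N)}. d i) \<le> (b / a) * (\<phi> (s N) - \<phi> (s (N + (n - N))))"
            by (rule invb) (use allin in \<open>metis add_diff_inverse_nat not_less\<close>)
          also have "\<dots> \<le> (b / a) * \<phi> (s N)" using phiN[of "N + (n - N)"] a b by (simp add: algebra_simps)
          finally show ?thesis .
        qed
        ultimately show ?thesis by simp
      qed
    qed
  qed
  have "summable (\<lambda>k. M * (d k + d (Suc k)))"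
    using sumd by (intro summable_mult summable_add) (auto simp: summable_Suc_iff)
  then have "summable (\<lambda>k. norm (Wf (Suc k) - Wf k))"
    by (rule summable_comparison_test'[of _ 1]) (simp add: stp)
  then show ?thesis by (rule summable_diff_convergent)
qed




lemma lsc_ev:
  fixes g :: "'a::metric_space \<Rightarrow> ereal"
  assumes lsc: "lsc_fun g" and s: "s \<longlonglongrightarrow> z0" and c: "c < g z0"
  shows "eventually (\<lambda>j. c < g (s j)) sequentially"
proof -
  have "c < Liminf (at z0) g" using lsc c unfolding lsc_fun_def by (metis less_le_trans)
  then have "eventually (\<lambda>x. c < g x) (at z0)" by (rule less_LiminfD)
  then obtain \<delta> where \<delta>: "\<delta> > 0" "\<And>x. x \<noteq> z0 \<Longrightarrow> dist x z0 < \<delta> \<Longrightarrow> c < g x"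
    unfolding eventually_at by auto
  have all: "dist x z0 < \<delta> \<Longrightarrow> c < g x" for x using \<delta> c by (cases "x = z0") auto
  show ?thesis using tendstoD[OF s \<delta>(1)] by (rule eventually_mono) (rule all)
qed

context PR
begin

lemma gradf_cont: "isCont gradf u"
proof -
  have "L-lipschitz_on UNIV gradf"
    by (rule lipschitz_onI) (use gradf_Lipschitz L_pos in \<open>auto simp: dist_norm\<close>)
  then have "continuous_on UNIV gradf" by (rule lipschitz_on_continuous_on)
  then show ?thesis by (simp add: continuous_on_eq_continuous_at)
qed

lemma f_cont: "isCont f u"
  using has_derivative_continuous[OF f_grad[of u]] by simp

lemma sub_limit:
  assumes r: "strict_mono r"
    and lim: "(\<lambda>j. (y (Suc (r j)), z (Suc (r j)), x (Suc (r j)))) \<longlonglongrightarrow> (ys, zs, xs)"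
  shows "\<exists>hs. (\<lambda>j. H (Suc (r j))) \<longlonglongrightarrow> hs \<and> merit f g \<gamma> (ys, zs, xs) = ereal hs"
proof -
  have yl: "(\<lambda>j. y (Suc (r j))) \<longlonglongrightarrow> ys" using tendsto_fst[OF lim] by simp
  have zl: "(\<lambda>j. z (Suc (r j))) \<longlonglongrightarrow> zs" using tendsto_fst[OF tendsto_snd[OF lim]] by simp
  have xl: "(\<lambda>j. x (Suc (r j))) \<longlonglongrightarrow> xs" using tendsto_snd[OF tendsto_snd[OF lim]] by simp
  define m where "m j = 2 *\<^sub>R y (Suc (r j)) - x (r j)" for j
  define ms where "ms = 2 *\<^sub>R ys - (ys + \<gamma> *\<^sub>R gradf ys)"
  have ml: "m \<longlonglongrightarrow> ms"
    unfolding m_def ms_def x_eq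
    by (intro tendsto_intros yl isCont_tendsto_compose[OF gradf_cont yl])
  define A where "A j = (norm (m j - z (Suc (r j))))\<^sup>2 / (2 * \<gamma>)" for j
  define B where "B u j = (norm (m j - u))\<^sup>2 / (2 * \<gamma>)" for u j
  have Al: "A \<longlonglongrightarrow> (norm (ms - zs))\<^sup>2 / (2 * \<gamma>)" unfolding A_def using gamma_pos by (intro tendsto_intros ml zl) auto
  have Bl: "B u \<longlonglongrightarrow> (norm (ms - u))\<^sup>2 / (2 * \<gamma>)" for u unfolding B_def using gamma_pos by (intro tendsto_intros ml) auto
  have zst: "ereal (G (Suc (r j)) + A j) \<le> g u + ereal (B u j)" for j u
    using z_step[of "r j" u] g_eq unfolding A_def B_def m_def by simp
  have ninf: "g zs \<noteq> - \<infinity>" using g_proper unfolding proper_fun_def by blast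
  have fin: "g zs \<noteq> \<infinity>"
  proof
    assume inf: "g zs = \<infinity>"
    obtain u0 where u0: "g u0 \<noteq> \<infinity>" using g_proper unfolding proper_fun_def by blast
    have "g u0 \<noteq> - \<infinity>" using g_proper unfolding proper_fun_def by blast
    with u0 obtain r0 where r0: "g u0 = ereal r0" by (cases "g u0") auto
    have le: "G (Suc (r j)) \<le> r0 + B u0 j - A j" for j using zst[of j u0] r0 by simp
    have "(\<lambda>j. r0 + B u0 j - A j) \<longlonglongrightarrow> r0 + (norm (ms - u0))\<^sup>2 / (2 * \<gamma>) - (norm (ms - zs))\<^sup>2 / (2 * \<gamma>)"
      by (intro tendsto_intros Bl Al)
    then have ev1: "eventually (\<lambda>j. r0 + B u0 j - A j < r0 + (norm (ms - u0))\<^sup>2 / (2 * \<gamma>) - (norm (ms - zs))\<^sup>2 / (2 * \<gamma>) + 1) sequentially"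
      by (intro order_tendstoD(2)) auto
    have ev2: "eventually (\<lambda>j. ereal (r0 + (norm (ms - u0))\<^sup>2 / (2 * \<gamma>) - (norm (ms - zs))\<^sup>2 / (2 * \<gamma>) + 1) < g (z (Suc (r j)))) sequentially"
      using inf by (intro lsc_ev[OF g_lsc zl]) simp
    have "eventually (\<lambda>j. False) sequentially"
      using ev1 ev2
    proof eventually_elim
      case (elim j)
      then show ?case using le[of j] g_eq[of "r j"] by simp
    qed
    then show False by simp
  qed
  obtain gs where gs: "g zs = ereal gs" using fin ninf by (cases "g zs") auto
  have Gl: "(\<lambda>j. G (Suc (r j))) \<longlonglongrightarrow> gs"
  proof (rule order_tendstoI)
    fix c assume "c < gs"
    then have "ereal c < g zs" using gs by simp
    from lsc_ev[OF g_lsc zl this] show "eventually (\<lambda>j. c < G (Suc (r j))) sequentially"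
      by (rule eventually_mono) (simp add: g_eq)
  next
    fix c assume c: "gs < c"
    have le: "G (Suc (r j)) \<le> gs + B zs j - A j" for j using zst[of j zs] gs by simp
    have "(\<lambda>j. gs + B zs j - A j) \<longlonglongrightarrow> gs + (norm (ms - zs))\<^sup>2 / (2 * \<gamma>) - (norm (ms - zs))\<^sup>2 / (2 * \<gamma>)"
      by (intro tendsto_intros Bl Al)
    then have "(\<lambda>j. gs + B zs j - A j) \<longlonglongrightarrow> gs" by simp
    from order_tendstoD(2)[OF this c] show "eventually (\<lambda>j. G (Suc (r j)) < c) sequentially"
      by (rule eventually_mono) (use le in \<open>smt (verit)\<close>)
  qed
  define hs where "hs = f ys - 3 / (2 * \<gamma>) * (norm (ys - zs))\<^sup>2 + (1 / \<gamma>) * inner (xs - ys) (zs - ys) + gs"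
  have "(\<lambda>j. H (Suc (r j))) \<longlonglongrightarrow> hs"
    unfolding H_def hs_def
    using gamma_pos by (intro tendsto_intros yl zl xl Gl isCont_tendsto_compose[OF f_cont yl]) auto
  moreover have "merit f g \<gamma> (ys, zs, xs) = ereal hs" unfolding merit_def hs_def using gs by simp
  ultimately show ?thesis by blast
qed

end



theorem theorem3:
  fixes f :: "'a::euclidean_space \<Rightarrow> real"
    and gradf :: "'a \<Rightarrow> 'a"
    and g :: "'a \<Rightarrow> ereal"
    and \<sigma> L \<gamma> :: real
    and y z x :: "nat \<Rightarrow> 'a"
    and ystar zstar xstar :: 'a
  assumes sigma_pos: "\<sigma> > 0" and L_pos: "L > 0"
    and f_grad: "\<And>u. (f has_derivative (\<lambda>h. inner (gradf u) h)) (at u)"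
    and f_strongly_convex: "convex_on UNIV (\<lambda>u. f u - \<sigma> / 2 * (norm u)\<^sup>2)"
    and gradf_Lipschitz: "\<And>u v. norm (gradf u - gradf v) \<le> L * norm (u - v)"
    and g_proper: "proper_fun g" and g_lsc: "lsc_fun g"
    and prox_nonempty: "\<And>w. \<exists>u. \<forall>u'. ereal \<gamma> * g u + ereal ((norm (u - w))\<^sup>2 / 2)
                                      \<le> ereal \<gamma> * g u' + ereal ((norm (u' - w))\<^sup>2 / 2)"
    and L_sigma: "3 * \<sigma> > 2 * L"
    and gamma_pos: "0 < \<gamma>" and gamma_bound: "\<gamma> < (3 * \<sigma> - 2 * L) / L\<^sup>2"
    and y_step: "\<And>t u. f (y (Suc t)) + (norm (y (Suc t) - x t))\<^sup>2 / (2 * \<gamma>)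
                        \<le> f u + (norm (u - x t))\<^sup>2 / (2 * \<gamma>)"
    and z_step: "\<And>t u. g (z (Suc t)) + ereal ((norm (2 *\<^sub>R y (Suc t) - x t - z (Suc t)))\<^sup>2 / (2 * \<gamma>))
                        \<le> g u + ereal ((norm (2 *\<^sub>R y (Suc t) - x t - u))\<^sup>2 / (2 * \<gamma>))"
    and x_step: "\<And>t. x (Suc t) = x t + 2 *\<^sub>R (z (Suc t) - y (Suc t))"
    and cluster: "\<exists>r. strict_mono r \<and>
                    ((\<lambda>t. (y (Suc (r t)), z (Suc (r t)), x (Suc (r t)))) \<longlonglongrightarrow> (ystar, zstar, xstar))"
    and KL: "KL_function (merit f g \<gamma>)"
  shows "convergent (\<lambda>t. (y (Suc t), z (Suc t), x (Suc t)))"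
proof -
  interpret PR f gradf g \<sigma> L \<gamma> y z x
    by unfold_locales (fact sigma_pos L_pos f_grad f_strongly_convex gradf_Lipschitz g_proper g_lsc
        gamma_pos gamma_bound y_step z_step x_step)+
  obtain r where r: "strict_mono r"
    and lim: "(\<lambda>t. (y (Suc (r t)), z (Suc (r t)), x (Suc (r t)))) \<longlonglongrightarrow> (ystar, zstar, xstar)"
    using cluster by blast
  obtain hs where hs: "(\<lambda>j. H (Suc (r j))) \<longlonglongrightarrow> hs" "merit f g \<gamma> (ystar, zstar, xstar) = ereal hs"
    using sub_limit[OF r lim] by blast
  have sucr: "strict_mono (\<lambda>j. Suc (r j))" using r by (simp add: strict_mono_def)
  have KLa: "limiting_subdiff (merit f g \<gamma>) (ystar, zstar, xstar) \<noteq> {} \<Longrightarrow> KL_at (merit f g \<gamma>) (ystar, zstar, xstar)"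
    using KL unfolding KL_function_def by blast
  have b0: "3 / (2 * \<gamma>) * (1 + \<gamma> * L) > 0" using gamma_pos L_pos by (intro mult_pos_pos) (auto simp: add_pos_pos)
  have M0: "3 + 2 * \<gamma> * L \<ge> 0" using gamma_pos L_pos by simp
  have conv: "convergent W"
  proof (rule KL_abstract[where h="merit f g \<gamma>" and Hf=H and d=dd and v=vv and a=acon
        and b="3 / (2 * \<gamma>) * (1 + \<gamma> * L)" and M="3 + 2 * \<gamma> * L" and hs=hs
        and ws="(ystar, zstar, xstar)" and r="\<lambda>j. Suc (r j)", OF acon_pos b0 M0])
    fix k :: nat assume k: "k \<ge> 1"
    then obtain t where t: "k = Suc t" by (cases k) auto
    show "merit f g \<gamma> (W k) = ereal (H k)" unfolding t by (rule merit_W)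
    show "H (Suc k) \<le> H k - acon * (dd k)\<^sup>2" unfolding t dd_def by (rule descent)
    show "vv k \<in> frechet_subdiff (merit f g \<gamma>) (W k)" unfolding t by (rule vv_frechet)
    show "norm (vv k) \<le> 3 / (2 * \<gamma>) * (1 + \<gamma> * L) * dd k"
      unfolding t using vv_norm[of t] by (simp only: mult.assoc)
    show "norm (W (Suc k) - W k) \<le> (3 + 2 * \<gamma> * L) * (dd k + dd (Suc k))" unfolding t by (rule W_step)
  next
    show "0 \<le> dd k" for k unfolding dd_def by simp
    show "strict_mono (\<lambda>j. Suc (r j))" by (rule sucr)
    show "1 \<le> Suc (r j)" for j by simp
    show "(\<lambda>j. W (Suc (r j))) \<longlonglongrightarrow> (ystar, zstar, xstar)" using lim unfolding W_def .
    show "(\<lambda>j. H (Suc (r j))) \<longlonglongrightarrow> hs" by (rule hs(1))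
    show "merit f g \<gamma> (ystar, zstar, xstar) = ereal hs" by (rule hs(2))
    show "limiting_subdiff (merit f g \<gamma>) (ystar, zstar, xstar) \<noteq> {} \<Longrightarrow> KL_at (merit f g \<gamma>) (ystar, zstar, xstar)"
      by (rule KLa)
  qed
  then obtain l where "W \<longlonglongrightarrow> l" unfolding convergent_def by blast
  then have "(\<lambda>t. W (Suc t)) \<longlonglongrightarrow> l" by (rule LIMSEQ_Suc)
  then show ?thesis unfolding convergent_def W_def by blast
qed


end
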